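(* Let $D$ be a division algebra and let $\sigma_1,\ldots,\sigma_n$ be pairwise commuting automorphisms of $D$. If the tuple $(\sigma_1,\ldots,\sigma_n)$ is not automorphically normalizable over $D$, then for any positive integers $d_1,\ldots,d_n$ the tuple $(\sigma_1^{d_1},\ldots,\sigma_n^{d_n})$ is also not automorphically normalizable over $D$.
   Context: All rings are associative with unity. For commuting automorphisms $\tau_1,\ldots,\tau_n$ of $D$, $D[t_1,\ldots,t_n;\tau_1,\ldots,\tau_n]$ is the skew polynomial ring in pairwise commuting variables with $t_ia=\tau_i(a)t_i$ for $a\in D$. For a ring $S\supseteq D$, $a\in S$ is automorphic over $D$ with respect to $\tau$ if $ab=\tau(b)a$ for all $b\in D$. Commuting $a_1,\ldots,a_m\in S$ are (left) algebraically independent over $D$ if monomials in them are left linearly independent over $D$. $S$ is automorphically normalizable over $D$ if there exist $m\ge0$ and commuting $a_1,\ldots,a_m\in S$, automorphic over $D$ with respect to pairwise commuting automorphisms, left algebraically independent over $D$, such that $S$ is finitely generated as a left module over the subring $D[a_1,\ldots,a_m]$ generated by $D\cup\{a_1,\ldots,a_m\}$. A tuple $(\tau_1,\ldots,\tau_n)$ of commuting automorphisms is automorphically normalizable over $D$ if every quotient of $D[t_1,\ldots,t_n;\tau_1,\ldots,\tau_n]$ by a proper two-sided ideal is automorphically normalizable over $D$. *)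

theory Defs
  imports "HOL-Algebra.QuotRing" "HOL-Algebra.Generated_Rings"
begin

definition ring_automorphism :: "('a::division_ring \<Rightarrow> 'a) \<Rightarrow> bool" where
  "ring_automorphism f \<longleftrightarrow> bij f \<and> (\<forall>x y. f (x + y) = f x + f y)
      \<and> (\<forall>x y. f (x * y) = f x * f y) \<and> f 1 = 1"

definition commuting_automorphisms :: "(nat \<Rightarrow> 'a::division_ring \<Rightarrow> 'a) \<Rightarrow> nat \<Rightarrow> bool" where
  "commuting_automorphisms \<sigma> n \<longleftrightarrow> (\<forall>i<n. ring_automorphism (\<sigma> i))
      \<and> (\<forall>i<n. \<forall>j<n. \<sigma> i \<circ> \<sigma> j = \<sigma> j \<circ> \<sigma> i)"

text \<open>Monomials t^e are exponent vectors e :: nat => nat with e i = 0 for i >= n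
  (variable t_(i+1) has index i).  sigma^e = sigma_0^(e 0) o ... o sigma_(n-1)^(e (n-1)).\<close>

fun aut_pow :: "(nat \<Rightarrow> 'a \<Rightarrow> 'a) \<Rightarrow> nat \<Rightarrow> (nat \<Rightarrow> nat) \<Rightarrow> 'a \<Rightarrow> 'a" where
  "aut_pow \<sigma> 0 e = id"
| "aut_pow \<sigma> (Suc k) e = aut_pow \<sigma> k e \<circ> (\<sigma> k ^^ e k)"

definition skew_carrier :: "nat \<Rightarrow> ((nat \<Rightarrow> nat) \<Rightarrow> 'a::division_ring) set" where
  "skew_carrier n = {p. finite {e. p e \<noteq> 0} \<and> (\<forall>e. p e \<noteq> 0 \<longrightarrow> (\<forall>i\<ge>n. e i = 0))}"

text \<open>(a t^alpha)(b t^beta) = a sigma^alpha(b) t^(alpha+beta).\<close>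
definition skew_mult :: "(nat \<Rightarrow> 'a::division_ring \<Rightarrow> 'a) \<Rightarrow> nat
    \<Rightarrow> ((nat \<Rightarrow> nat) \<Rightarrow> 'a) \<Rightarrow> ((nat \<Rightarrow> nat) \<Rightarrow> 'a) \<Rightarrow> ((nat \<Rightarrow> nat) \<Rightarrow> 'a)" where
  "skew_mult \<sigma> n p q = (\<lambda>\<gamma>. \<Sum>\<alpha> \<in> {\<alpha>. \<forall>i. \<alpha> i \<le> \<gamma> i}.
       p \<alpha> * aut_pow \<sigma> n \<alpha> (q (\<lambda>i. \<gamma> i - \<alpha> i)))"

definition skew_const :: "'a::division_ring \<Rightarrow> ((nat \<Rightarrow> nat) \<Rightarrow> 'a)" where
  "skew_const d = (\<lambda>e. if e = (\<lambda>_. 0) then d else 0)"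

definition skew_poly_ring :: "(nat \<Rightarrow> 'a::division_ring \<Rightarrow> 'a) \<Rightarrow> nat \<Rightarrow> ((nat \<Rightarrow> nat) \<Rightarrow> 'a) ring" where
  "skew_poly_ring \<sigma> n = \<lparr>
     carrier = skew_carrier n,
     mult = skew_mult \<sigma> n,
     one = skew_const 1,
     zero = (\<lambda>_. 0),
     add = (\<lambda>p q e. p e + q e) \<rparr>"

definition automorphic_over :: "('b, 'c) ring_scheme \<Rightarrow> ('a \<Rightarrow> 'b) \<Rightarrow> ('a \<Rightarrow> 'a) \<Rightarrow> 'b \<Rightarrow> bool" where
  "automorphic_over S \<iota> \<tau> x \<longleftrightarrow> x \<in> carrier S \<and> (\<forall>b. x \<otimes>\<^bsub>S\<^esub> \<iota> b = \<iota> (\<tau> b) \<otimes>\<^bsub>S\<^esub> x)"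

fun elem_monomial :: "('b, 'c) ring_scheme \<Rightarrow> (nat \<Rightarrow> 'b) \<Rightarrow> nat \<Rightarrow> (nat \<Rightarrow> nat) \<Rightarrow> 'b" where
  "elem_monomial S a 0 \<beta> = \<one>\<^bsub>S\<^esub>"
| "elem_monomial S a (Suc k) \<beta> = elem_monomial S a k \<beta> \<otimes>\<^bsub>S\<^esub> (a k [^]\<^bsub>S\<^esub> \<beta> k)"

definition left_alg_indep :: "('b, 'c) ring_scheme \<Rightarrow> ('a::zero \<Rightarrow> 'b) \<Rightarrow> (nat \<Rightarrow> 'b) \<Rightarrow> nat \<Rightarrow> bool" where
  "left_alg_indep S \<iota> a m \<longleftrightarrow>
     (\<forall>B c. finite B \<and> (\<forall>\<beta>\<in>B. \<forall>i\<ge>m. \<beta> i = 0) \<and>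
        finsum S (\<lambda>\<beta>. \<iota> (c \<beta>) \<otimes>\<^bsub>S\<^esub> elem_monomial S a m \<beta>) B = \<zero>\<^bsub>S\<^esub>
        \<longrightarrow> (\<forall>\<beta>\<in>B. c \<beta> = 0))"

definition fin_gen_left_module :: "('b, 'c) ring_scheme \<Rightarrow> 'b set \<Rightarrow> bool" where
  "fin_gen_left_module S T \<longleftrightarrow>
     (\<exists>G. finite G \<and> G \<subseteq> carrier S \<and>
        (\<forall>s\<in>carrier S. \<exists>r. (\<forall>g\<in>G. r g \<in> T) \<and> s = finsum S (\<lambda>g. r g \<otimes>\<^bsub>S\<^esub> g) G))"

definition aut_normalizable :: "('b, 'c) ring_scheme \<Rightarrow> ('a::division_ring \<Rightarrow> 'b) \<Rightarrow> bool" where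
  "aut_normalizable S \<iota> \<longleftrightarrow>
     (\<exists>m a \<tau>. commuting_automorphisms \<tau> m
        \<and> (\<forall>i<m. automorphic_over S \<iota> (\<tau> i) (a i))
        \<and> (\<forall>i<m. \<forall>j<m. a i \<otimes>\<^bsub>S\<^esub> a j = a j \<otimes>\<^bsub>S\<^esub> a i)
        \<and> left_alg_indep S \<iota> a m
        \<and> fin_gen_left_module S (generate_ring S (range \<iota> \<union> a ` {..<m})))"

text \<open>A tuple (sigma_0..sigma_(n-1)) is automorphically normalizable over D if every quotient
  of D[t_1..t_n; sigma] by a proper two-sided ideal (HOL-Algebra ideals are two-sided)
  is automorphically normalizable over D, D embedded via d |-> class of the constant d.\<close>
definition aut_normalizable_tuple :: "(nat \<Rightarrow> 'a::division_ring \<Rightarrow> 'a) \<Rightarrow> nat \<Rightarrow> bool" where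
  "aut_normalizable_tuple \<sigma> n \<longleftrightarrow>
     (\<forall>I. ideal I (skew_poly_ring \<sigma> n) \<and> I \<noteq> carrier (skew_poly_ring \<sigma> n) \<longrightarrow>
        aut_normalizable (skew_poly_ring \<sigma> n Quot I)
          (\<lambda>d. I +>\<^bsub>skew_poly_ring \<sigma> n\<^esub> skew_const d))"

end

theory Submission
  imports Defs
begin



lemma hom_finsum':
  assumes "ring_hom_ring R S h" "f \<in> A \<rightarrow> carrier R"
  shows "h (finsum R f A) = finsum S (h \<circ> f) A"
proof -
  interpret ring_hom_ring R S h by fact
  show ?thesis using assms(2)
    by (induct A rule: infinite_finite_induct) (auto simp: Pi_def)
qed

lemma finsum_Sigma_aux:
  assumes "ring S" "finite K" "finite G" "\<forall>k\<in>K. \<forall>g\<in>G. f k g \<in> carrier S"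
  shows "finsum S (\<lambda>k. finsum S (f k) G) K = finsum S (\<lambda>p. f (fst p) (snd p)) (K \<times> G)"
proof -
  interpret ring S by fact
  show ?thesis
  using assms(2,4)
proof (induct K rule: finite_induct)
  case empty
  then show ?case by simp
next
  case (insert k K)
  have e: "insert k K \<times> G = ((\<lambda>g. (k,g)) ` G) \<union> (K \<times> G)" by auto
  have "finsum S (\<lambda>p. f (fst p) (snd p)) (insert k K \<times> G)
      = finsum S (\<lambda>p. f (fst p) (snd p)) ((\<lambda>g. (k,g)) ` G) \<oplus>\<^bsub>S\<^esub> finsum S (\<lambda>p. f (fst p) (snd p)) (K \<times> G)"
    unfolding e using insert assms(3)
    by (intro finsum_Un_disjoint) (auto simp: Pi_def)
  also have "finsum S (\<lambda>p. f (fst p) (snd p)) ((\<lambda>g. (k,g)) ` G) = finsum S (f k) G"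
    using insert by (subst finsum_reindex) (auto simp: Pi_def inj_on_def)
  finally show ?case using insert by (simp add: Pi_def)
qed
qed




lemma conv_index:
  assumes "ring S" "finite K" "g \<in> K \<rightarrow> carrier S" "T \<subseteq> carrier S" "\<zero>\<^bsub>S\<^esub> \<in> T"
    "\<forall>a\<in>T. \<forall>b\<in>T. a \<oplus>\<^bsub>S\<^esub> b \<in> T" "r \<in> K \<rightarrow> T"
  shows "\<exists>r'. (\<forall>x\<in>g`K. r' x \<in> T) \<and>
     finsum S (\<lambda>k. r k \<otimes>\<^bsub>S\<^esub> g k) K = finsum S (\<lambda>x. r' x \<otimes>\<^bsub>S\<^esub> x) (g`K)"
proof -
  interpret ring S by fact
  show ?thesis
  using assms(2,3,7)
proof (induct K rule: finite_induct)
  case empty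
  then show ?case by simp
next
  case (insert k K)
  have pr: "g \<in> K \<rightarrow> carrier S" "r \<in> K \<rightarrow> T" using insert.prems by auto
  obtain r' where r': "\<forall>x\<in>g`K. r' x \<in> T"
    "finsum S (\<lambda>k. r k \<otimes>\<^bsub>S\<^esub> g k) K = finsum S (\<lambda>x. r' x \<otimes>\<^bsub>S\<^esub> x) (g`K)"
    using insert.hyps(3)[OF pr] by blast
  have rk: "r k \<in> T" "g k \<in> carrier S" using insert by auto
  have TC: "\<And>x. x \<in> T \<Longrightarrow> x \<in> carrier S" using assms(4) by auto
  have gK: "g ` K \<subseteq> carrier S" using insert by auto
  have L: "finsum S (\<lambda>k. r k \<otimes>\<^bsub>S\<^esub> g k) (insert k K) = r k \<otimes>\<^bsub>S\<^esub> g k \<oplus>\<^bsub>S\<^esub> finsum S (\<lambda>x. r' x \<otimes>\<^bsub>S\<^esub> x) (g`K)"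
    using insert r' TC by (subst finsum_insert) (auto simp: Pi_def)
  show ?case
  proof (cases "g k \<in> g ` K")
    case True
    define r'' where "r'' = r'(g k := r k \<oplus>\<^bsub>S\<^esub> r' (g k))"
    have A: "insert (g k) (g ` K - {g k}) = g ` K" using True by blast
    have fin: "finite (g ` K - {g k})" using insert by auto
      have c1: "r' (g k) \<otimes>\<^bsub>S\<^esub> g k \<in> carrier S" using r' TC True rk by auto
      have c2: "finsum S (\<lambda>x. r' x \<otimes>\<^bsub>S\<^esub> x) (g`K - {g k}) \<in> carrier S"
        using r' TC gK by (intro finsum_closed) (auto simp: Pi_def)
      have c3: "r k \<otimes>\<^bsub>S\<^esub> g k \<in> carrier S" using TC rk by auto
    have F1: "finsum S (\<lambda>x. r' x \<otimes>\<^bsub>S\<^esub> x) (g`K) = r' (g k) \<otimes>\<^bsub>S\<^esub> g k \<oplus>\<^bsub>S\<^esub> finsum S (\<lambda>x. r' x \<otimes>\<^bsub>S\<^esub> x) (g`K - {g k})"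
    proof -
      have "(\<lambda>x. r' x \<otimes>\<^bsub>S\<^esub> x) \<in> (g ` K - {g k}) \<rightarrow> carrier S"
        using r' TC gK by (auto simp: Pi_def subset_iff)
      then show ?thesis
        using finsum_insert[OF fin, of "g k" "\<lambda>x. r' x \<otimes>\<^bsub>S\<^esub> x"] c1 unfolding A by simp
    qed
    have F2: "finsum S (\<lambda>x. r'' x \<otimes>\<^bsub>S\<^esub> x) (g`K) = r'' (g k) \<otimes>\<^bsub>S\<^esub> g k \<oplus>\<^bsub>S\<^esub> finsum S (\<lambda>x. r'' x \<otimes>\<^bsub>S\<^esub> x) (g`K - {g k})"
    proof -
      have "r'' (g k) \<otimes>\<^bsub>S\<^esub> g k \<in> carrier S" unfolding r''_def using c1 c3 rk TC r' True by auto
      moreover have "(\<lambda>x. r'' x \<otimes>\<^bsub>S\<^esub> x) \<in> (g ` K - {g k}) \<rightarrow> carrier S"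
        using r' TC gK by (auto simp: Pi_def subset_iff r''_def)
      ultimately show ?thesis
        using finsum_insert[OF fin, of "g k" "\<lambda>x. r'' x \<otimes>\<^bsub>S\<^esub> x"] unfolding A by simp
    qed
    have F3: "finsum S (\<lambda>x. r'' x \<otimes>\<^bsub>S\<^esub> x) (g`K - {g k}) = finsum S (\<lambda>x. r' x \<otimes>\<^bsub>S\<^esub> x) (g`K - {g k})"
      using r' TC gK by (intro finsum_cong') (auto simp: r''_def Pi_def subset_iff)
    have F4: "r'' (g k) \<otimes>\<^bsub>S\<^esub> g k = r k \<otimes>\<^bsub>S\<^esub> g k \<oplus>\<^bsub>S\<^esub> r' (g k) \<otimes>\<^bsub>S\<^esub> g k"
      unfolding r''_def fun_upd_same using rk r' TC True by (intro l_distr) auto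
    have F5: "finsum S (\<lambda>x. r'' x \<otimes>\<^bsub>S\<^esub> x) (g`K) = r k \<otimes>\<^bsub>S\<^esub> g k \<oplus>\<^bsub>S\<^esub> finsum S (\<lambda>x. r' x \<otimes>\<^bsub>S\<^esub> x) (g`K)"
      unfolding F2 F3 F4 F1 by (rule a_assoc[OF c3 c1 c2])
    have gi: "g`(insert k K) = g`K" using True by (simp add: insert_absorb)
    have F6: "\<forall>x\<in>g`K. r'' x \<in> T"
    proof
      fix x assume x: "x \<in> g`K"
      show "r'' x \<in> T"
      proof (cases "x = g k")
        case True
        have "r' (g k) \<in> T" using r'(1) \<open>g k \<in> g ` K\<close> by blast
        then show ?thesis using True rk assms(6) unfolding r''_def by simp
      next
        case False
        have "r' x \<in> T" using r'(1) x by blast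
        then show ?thesis using False unfolding r''_def by simp
      qed
    qed
    show ?thesis unfolding gi L by (rule exI[of _ r'']) (use F5 F6 in simp)
  next
    case False
    define r'' where "r'' = r'(g k := r k)"
    have "finsum S (\<lambda>x. r'' x \<otimes>\<^bsub>S\<^esub> x) (g`(insert k K)) = r k \<otimes>\<^bsub>S\<^esub> g k \<oplus>\<^bsub>S\<^esub> finsum S (\<lambda>x. r'' x \<otimes>\<^bsub>S\<^esub> x) (g`K)"
      using insert False r' TC gK rk by (subst image_insert, subst finsum_insert) (auto simp: r''_def Pi_def subset_iff)
    also have "finsum S (\<lambda>x. r'' x \<otimes>\<^bsub>S\<^esub> x) (g`K) = finsum S (\<lambda>x. r' x \<otimes>\<^bsub>S\<^esub> x) (g`K)"
    proof (intro finsum_cong')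
      show "(\<lambda>x. r' x \<otimes>\<^bsub>S\<^esub> x) \<in> g ` K \<rightarrow> carrier S" using r' TC gK by (auto simp: Pi_def)
      fix x assume "x \<in> g ` K"
      then have "x \<noteq> g k" using False by blast
      then show "r'' x \<otimes>\<^bsub>S\<^esub> x = r' x \<otimes>\<^bsub>S\<^esub> x" unfolding r''_def by simp
    qed simp
    finally show ?thesis using L r' rk by (rule_tac x=r'' in exI) (auto simp: r''_def)
  qed
qed
qed




lemma gen_ring_image:
  assumes "ring S'" "ring S" "ring_hom_ring S' S \<psi>" "A \<subseteq> carrier S'"
  shows "\<psi> ` generate_ring S' A \<subseteq> generate_ring S (\<psi> ` A)"
proof -
  interpret ring_hom_ring S' S \<psi> by fact
  have "\<psi> x \<in> generate_ring S (\<psi> ` A)" if "x \<in> generate_ring S' A" for x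
    using that
  proof (induct rule: generate_ring.induct)
    case one then show ?case by (simp add: generate_ring.one)
  next
    case (incl h) then show ?case by (simp add: generate_ring.incl)
  next
    case (a_inv h)
    have "h \<in> carrier S'" using R.generate_ring_in_carrier[OF assms(4) a_inv(1)] .
    then show ?case using a_inv by (simp add: generate_ring.a_inv)
  next
    case (eng_add h1 h2)
    have "h1 \<in> carrier S'" "h2 \<in> carrier S'" using R.generate_ring_in_carrier[OF assms(4)] eng_add by auto
    then show ?case using eng_add by (simp add: generate_ring.eng_add)
  next
    case (eng_mult h1 h2)
    have "h1 \<in> carrier S'" "h2 \<in> carrier S'" using R.generate_ring_in_carrier[OF assms(4)] eng_add eng_mult by auto
    then show ?case using eng_mult by (simp add: generate_ring.eng_mult)
  qed
  then show ?thesis by blast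
qed

lemma elem_monomial_closed:
  assumes "ring S" "\<forall>i<k. a i \<in> carrier S"
  shows "elem_monomial S a k \<beta> \<in> carrier S"
proof -
  interpret ring S by fact
  show ?thesis using assms(2) by (induct k) auto
qed

lemma elem_monomial_hom:
  assumes "ring_hom_ring S' S \<psi>" "\<forall>i<k. a i \<in> carrier S'"
  shows "\<psi> (elem_monomial S' a k \<beta>) = elem_monomial S (\<lambda>i. \<psi> (a i)) k \<beta>"
proof -
  interpret ring_hom_ring S' S \<psi> by fact
  show ?thesis using assms(2)
  proof (induct k)
    case 0 then show ?case by simp
  next
    case (Suc k)
    have c: "elem_monomial S' a k \<beta> \<in> carrier S'"
      using elem_monomial_closed[OF R.ring_axioms, of k a] Suc.prems by auto
    have "a k [^]\<^bsub>S'\<^esub> \<beta> k \<in> carrier S'" using Suc.prems by auto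
    then show ?case using Suc c by (simp add: hom_nat_pow)
  qed
qed




lemma transfer_normalizable:
  fixes \<iota>' :: "'a::division_ring \<Rightarrow> 'b" and \<iota> :: "'a \<Rightarrow> 'c"
    and S' :: "('b, 'd) ring_scheme" and S :: "('c, 'e) ring_scheme"
  assumes S'r: "ring S'" and Sr: "ring S" and hom: "ring_hom_ring S' S \<psi>"
    and inj: "inj_on \<psi> (carrier S')"
    and \<iota>'c: "\<forall>b. \<iota>' b \<in> carrier S'" and \<iota>\<psi>: "\<forall>b. \<psi> (\<iota>' b) = \<iota> b"
    and finK: "finite K" and gK: "g \<in> K \<rightarrow> carrier S"
    and genK: "\<forall>s\<in>carrier S. \<exists>x. (\<forall>k\<in>K. x k \<in> \<psi> ` carrier S') \<and> s = finsum S (\<lambda>k. x k \<otimes>\<^bsub>S\<^esub> g k) K"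
    and N: "aut_normalizable S' \<iota>'"
  shows "aut_normalizable S \<iota>"
proof -
  interpret h: ring_hom_ring S' S \<psi> by fact
  obtain m a' \<tau> where ca: "commuting_automorphisms \<tau> m"
    and au: "\<forall>i<m. automorphic_over S' \<iota>' (\<tau> i) (a' i)"
    and cm: "\<forall>i<m. \<forall>j<m. a' i \<otimes>\<^bsub>S'\<^esub> a' j = a' j \<otimes>\<^bsub>S'\<^esub> a' i"
    and li: "left_alg_indep S' \<iota>' a' m"
    and fg: "fin_gen_left_module S' (generate_ring S' (range \<iota>' \<union> a' ` {..<m}))"
    using N unfolding aut_normalizable_def by blast
  define a where "a i = \<psi> (a' i)" for i
  have a'c: "\<forall>i<m. a' i \<in> carrier S'" using au unfolding automorphic_over_def by blast
  have A1: "\<forall>i<m. automorphic_over S \<iota> (\<tau> i) (a i)"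
  proof (intro allI impI)
    fix i assume i: "i < m"
    have ac: "a' i \<in> carrier S'" using a'c i by blast
    have eq: "\<And>b. a' i \<otimes>\<^bsub>S'\<^esub> \<iota>' b = \<iota>' (\<tau> i b) \<otimes>\<^bsub>S'\<^esub> a' i"
      using au i unfolding automorphic_over_def by blast
    show "automorphic_over S \<iota> (\<tau> i) (a i)"
      unfolding automorphic_over_def
    proof (intro conjI allI)
      show "a i \<in> carrier S" unfolding a_def using ac by simp
      fix b
      have "a i \<otimes>\<^bsub>S\<^esub> \<iota> b = \<psi> (a' i \<otimes>\<^bsub>S'\<^esub> \<iota>' b)"
        unfolding a_def using ac \<iota>'c \<iota>\<psi> by simp
      also have "\<dots> = \<psi> (\<iota>' (\<tau> i b) \<otimes>\<^bsub>S'\<^esub> a' i)" using eq by simp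
      also have "\<dots> = \<iota> (\<tau> i b) \<otimes>\<^bsub>S\<^esub> a i"
        unfolding a_def using ac \<iota>'c \<iota>\<psi> by simp
      finally show "a i \<otimes>\<^bsub>S\<^esub> \<iota> b = \<iota> (\<tau> i b) \<otimes>\<^bsub>S\<^esub> a i" .
    qed
  qed
  have A2: "\<forall>i<m. \<forall>j<m. a i \<otimes>\<^bsub>S\<^esub> a j = a j \<otimes>\<^bsub>S\<^esub> a i"
  proof (intro allI impI)
    fix i j assume "i < m" "j < m"
    then have c: "a' i \<in> carrier S'" "a' j \<in> carrier S'" and e: "a' i \<otimes>\<^bsub>S'\<^esub> a' j = a' j \<otimes>\<^bsub>S'\<^esub> a' i"
      using a'c cm by auto
    have "a i \<otimes>\<^bsub>S\<^esub> a j = \<psi> (a' i \<otimes>\<^bsub>S'\<^esub> a' j)" unfolding a_def using c by simp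
    also have "\<dots> = a j \<otimes>\<^bsub>S\<^esub> a i" unfolding e a_def using c by simp
    finally show "a i \<otimes>\<^bsub>S\<^esub> a j = a j \<otimes>\<^bsub>S\<^esub> a i" .
  qed
  have monoeq: "\<psi> (elem_monomial S' a' m \<beta>) = elem_monomial S a m \<beta>" for \<beta>
    unfolding a_def using elem_monomial_hom[OF hom] a'c by blast
  have monoc: "elem_monomial S' a' m \<beta> \<in> carrier S'" for \<beta>
    using elem_monomial_closed[OF S'r] a'c by blast
  have ic: "\<iota> b \<in> carrier S" for b using \<iota>'c \<iota>\<psi> h.hom_closed by metis
  have mc: "elem_monomial S a m \<beta> \<in> carrier S" for \<beta> using monoeq monoc h.hom_closed by metis
  have A3: "left_alg_indep S \<iota> a m"
    unfolding left_alg_indep_def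
  proof (intro allI impI)
    fix B c
    assume H: "finite B \<and> (\<forall>\<beta>\<in>B. \<forall>i\<ge>m. \<beta> i = 0) \<and>
        finsum S (\<lambda>\<beta>. \<iota> (c \<beta>) \<otimes>\<^bsub>S\<^esub> elem_monomial S a m \<beta>) B = \<zero>\<^bsub>S\<^esub>"
    have fc: "(\<lambda>\<beta>. \<iota>' (c \<beta>) \<otimes>\<^bsub>S'\<^esub> elem_monomial S' a' m \<beta>) \<in> B \<rightarrow> carrier S'"
      using \<iota>'c monoc by auto
    have "\<psi> (finsum S' (\<lambda>\<beta>. \<iota>' (c \<beta>) \<otimes>\<^bsub>S'\<^esub> elem_monomial S' a' m \<beta>) B)
        = finsum S (\<psi> \<circ> (\<lambda>\<beta>. \<iota>' (c \<beta>) \<otimes>\<^bsub>S'\<^esub> elem_monomial S' a' m \<beta>)) B"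
      using hom_finsum'[OF hom fc] .
    also have "\<dots> = finsum S (\<lambda>\<beta>. \<iota> (c \<beta>) \<otimes>\<^bsub>S\<^esub> elem_monomial S a m \<beta>) B"
    proof (intro h.S.finsum_cong')
      show "(\<lambda>\<beta>. \<iota> (c \<beta>) \<otimes>\<^bsub>S\<^esub> elem_monomial S a m \<beta>) \<in> B \<rightarrow> carrier S"
        using ic mc by auto
      fix \<beta> show "(\<psi> \<circ> (\<lambda>\<beta>. \<iota>' (c \<beta>) \<otimes>\<^bsub>S'\<^esub> elem_monomial S' a' m \<beta>)) \<beta> = \<iota> (c \<beta>) \<otimes>\<^bsub>S\<^esub> elem_monomial S a m \<beta>"
        using \<iota>'c monoc \<iota>\<psi> monoeq by simp
    qed simp
    also have "\<dots> = \<psi> \<zero>\<^bsub>S'\<^esub>" using H by simp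
    finally have E: "\<psi> (finsum S' (\<lambda>\<beta>. \<iota>' (c \<beta>) \<otimes>\<^bsub>S'\<^esub> elem_monomial S' a' m \<beta>) B) = \<psi> \<zero>\<^bsub>S'\<^esub>" .
    have "finsum S' (\<lambda>\<beta>. \<iota>' (c \<beta>) \<otimes>\<^bsub>S'\<^esub> elem_monomial S' a' m \<beta>) B = \<zero>\<^bsub>S'\<^esub>"
      by (rule inj_onD[OF inj E]) (use fc in auto)
    then show "\<forall>\<beta>\<in>B. c \<beta> = 0" using li H unfolding left_alg_indep_def by blast
  qed
  define T' where "T' = generate_ring S' (range \<iota>' \<union> a' ` {..<m})"
  define T where "T = generate_ring S (range \<iota> \<union> a ` {..<m})"
  have Hc': "range \<iota>' \<union> a' ` {..<m} \<subseteq> carrier S'" using \<iota>'c a'c by auto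
  have Hc: "range \<iota> \<union> a ` {..<m} \<subseteq> carrier S" using ic A1 unfolding automorphic_over_def by auto
  have T'c: "T' \<subseteq> carrier S'" unfolding T'_def using h.R.generate_ring_incl[OF Hc'] .
  have Tc: "T \<subseteq> carrier S" unfolding T_def using h.S.generate_ring_incl[OF Hc] .
  have T0: "\<zero>\<^bsub>S\<^esub> \<in> T" unfolding T_def using h.S.zero_in_generate .
  have Tadd: "\<forall>x\<in>T. \<forall>y\<in>T. x \<oplus>\<^bsub>S\<^esub> y \<in> T" unfolding T_def by (auto intro: generate_ring.eng_add)
  have img: "\<psi> ` (range \<iota>' \<union> a' ` {..<m}) = range \<iota> \<union> a ` {..<m}"
    unfolding image_Un image_comp using \<iota>\<psi> by (auto simp: a_def comp_def)
  have \<psi>T: "\<psi> ` T' \<subseteq> T"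
    using gen_ring_image[OF S'r Sr hom Hc'] unfolding T'_def T_def img .
  obtain G' where G'f: "finite G'" and G'c: "G' \<subseteq> carrier S'"
    and G'g: "\<forall>s\<in>carrier S'. \<exists>r. (\<forall>g\<in>G'. r g \<in> T') \<and> s = finsum S' (\<lambda>g. r g \<otimes>\<^bsub>S'\<^esub> g) G'"
    using fg unfolding fin_gen_left_module_def T'_def by blast
  define gg where "gg p = \<psi> (snd p) \<otimes>\<^bsub>S\<^esub> g (fst p)" for p
  have ggc: "gg \<in> K \<times> G' \<rightarrow> carrier S"
  proof
    fix p assume "p \<in> K \<times> G'"
    then have "\<psi> (snd p) \<in> carrier S" "g (fst p) \<in> carrier S" using gK G'c by auto
    then show "gg p \<in> carrier S" unfolding gg_def by simp
  qed
  have A4: "fin_gen_left_module S T"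
    unfolding fin_gen_left_module_def
  proof (intro exI[of _ "gg ` (K \<times> G')"] conjI ballI)
    show "finite (gg ` (K \<times> G'))" using finK G'f by simp
    show "gg ` (K \<times> G') \<subseteq> carrier S" using ggc by auto
    fix s assume s: "s \<in> carrier S"
    obtain x where xK: "\<forall>k\<in>K. x k \<in> \<psi> ` carrier S'" and sx: "s = finsum S (\<lambda>k. x k \<otimes>\<^bsub>S\<^esub> g k) K"
      using genK s by blast
    have "\<forall>k\<in>K. \<exists>z. z \<in> carrier S' \<and> x k = \<psi> z" using xK by blast
    then obtain Z where Z: "\<forall>k\<in>K. Z k \<in> carrier S' \<and> x k = \<psi> (Z k)"
      by (rule bchoice[elim_format]) blast
    have "\<forall>k\<in>K. \<exists>r. (\<forall>g\<in>G'. r g \<in> T') \<and> Z k = finsum S' (\<lambda>g. r g \<otimes>\<^bsub>S'\<^esub> g) G'"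
      using Z G'g by blast
    then obtain Y where Y: "\<forall>k\<in>K. (\<forall>g\<in>G'. Y k g \<in> T') \<and> Z k = finsum S' (\<lambda>g. Y k g \<otimes>\<^bsub>S'\<^esub> g) G'"
      by (rule bchoice[elim_format]) blast
    have Yc: "Y k g' \<in> carrier S'" if "k \<in> K" "g' \<in> G'" for k g' using Y that T'c by blast
    have YT: "\<psi> (Y k g') \<in> T" if "k \<in> K" "g' \<in> G'" for k g' using Y that \<psi>T by blast
    have xk: "x k = finsum S (\<lambda>g'. \<psi> (Y k g') \<otimes>\<^bsub>S\<^esub> \<psi> g') G'" if k: "k \<in> K" for k
    proof -
      have f: "(\<lambda>g. Y k g \<otimes>\<^bsub>S'\<^esub> g) \<in> G' \<rightarrow> carrier S'" using Yc k G'c by auto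
      have "x k = \<psi> (finsum S' (\<lambda>g. Y k g \<otimes>\<^bsub>S'\<^esub> g) G')" using Z Y k by simp
      also have "\<dots> = finsum S (\<psi> \<circ> (\<lambda>g. Y k g \<otimes>\<^bsub>S'\<^esub> g)) G'" using hom_finsum'[OF hom f] .
      also have "\<dots> = finsum S (\<lambda>g'. \<psi> (Y k g') \<otimes>\<^bsub>S\<^esub> \<psi> g') G'"
        using Yc k G'c by (intro h.S.finsum_cong') auto
      finally show ?thesis .
    qed
    have "s = finsum S (\<lambda>k. finsum S (\<lambda>g'. \<psi> (Y k g') \<otimes>\<^bsub>S\<^esub> gg (k, g')) G') K"
      unfolding sx
    proof (intro h.S.finsum_cong')
      show "(\<lambda>k. finsum S (\<lambda>g'. \<psi> (Y k g') \<otimes>\<^bsub>S\<^esub> gg (k, g')) G') \<in> K \<rightarrow> carrier S"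
        using Yc G'c ggc by (auto intro!: h.S.finsum_closed)
      fix k assume k: "k \<in> K"
      have "x k \<otimes>\<^bsub>S\<^esub> g k = finsum S (\<lambda>g'. \<psi> (Y k g') \<otimes>\<^bsub>S\<^esub> \<psi> g') G' \<otimes>\<^bsub>S\<^esub> g k"
        using xk k by simp
      also have "\<dots> = finsum S (\<lambda>g'. (\<psi> (Y k g') \<otimes>\<^bsub>S\<^esub> \<psi> g') \<otimes>\<^bsub>S\<^esub> g k) G'"
        using Yc G'c k gK G'f by (intro h.S.finsum_ldistr) auto
      also have "\<dots> = finsum S (\<lambda>g'. \<psi> (Y k g') \<otimes>\<^bsub>S\<^esub> gg (k, g')) G'"
      proof (intro h.S.finsum_cong')
        have gk: "g k \<in> carrier S" using gK k by auto
        have c1: "\<And>g'. g' \<in> G' \<Longrightarrow> \<psi> g' \<in> carrier S" using G'c by auto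
        have c2: "\<And>g'. g' \<in> G' \<Longrightarrow> \<psi> (Y k g') \<in> carrier S" using Yc k by auto
        show "(\<lambda>g'. \<psi> (Y k g') \<otimes>\<^bsub>S\<^esub> gg (k, g')) \<in> G' \<rightarrow> carrier S"
          unfolding gg_def using gk c1 c2 by auto
        fix g' assume "g' \<in> G'"
        then show "\<psi> (Y k g') \<otimes>\<^bsub>S\<^esub> \<psi> g' \<otimes>\<^bsub>S\<^esub> g k = \<psi> (Y k g') \<otimes>\<^bsub>S\<^esub> gg (k, g')"
          unfolding gg_def using gk c1 c2 by (simp add: h.S.m_assoc)
      qed simp
      finally show "x k \<otimes>\<^bsub>S\<^esub> g k = finsum S (\<lambda>g'. \<psi> (Y k g') \<otimes>\<^bsub>S\<^esub> gg (k, g')) G'" .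
    qed simp
    also have "\<dots> = finsum S (\<lambda>p. \<psi> (Y (fst p) (snd p)) \<otimes>\<^bsub>S\<^esub> gg p) (K \<times> G')"
      using finsum_Sigma_aux[OF Sr finK G'f, of "\<lambda>k g'. \<psi> (Y k g') \<otimes>\<^bsub>S\<^esub> gg (k, g')"] Yc ggc
      by (auto simp: Pi_def)
    finally have sY: "s = finsum S (\<lambda>p. \<psi> (Y (fst p) (snd p)) \<otimes>\<^bsub>S\<^esub> gg p) (K \<times> G')" .
    obtain r' where r': "\<forall>x\<in>gg`(K \<times> G'). r' x \<in> T"
      "finsum S (\<lambda>p. \<psi> (Y (fst p) (snd p)) \<otimes>\<^bsub>S\<^esub> gg p) (K \<times> G') = finsum S (\<lambda>x. r' x \<otimes>\<^bsub>S\<^esub> x) (gg`(K \<times> G'))"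
    proof -
      have "(\<lambda>p. \<psi> (Y (fst p) (snd p))) \<in> K \<times> G' \<rightarrow> T" using YT by auto
      then show ?thesis using conv_index[OF Sr _ ggc Tc T0 Tadd, of "\<lambda>p. \<psi> (Y (fst p) (snd p))"] finK G'f that
        by blast
    qed
    show "\<exists>r. (\<forall>g\<in>gg ` (K \<times> G'). r g \<in> T) \<and> s = finsum S (\<lambda>g. r g \<otimes>\<^bsub>S\<^esub> g) (gg ` (K \<times> G'))"
      by (rule exI[of _ r']) (use r' sY in simp)
  qed
  show ?thesis unfolding aut_normalizable_def
    using ca A1 A2 A3 A4 unfolding T_def by blast
qed




lemma finite_bounded_funs:
  assumes "finite F"
  shows "finite {\<alpha>::nat\<Rightarrow>nat. \<forall>i. \<alpha> i \<le> b i \<and> (i \<notin> F \<longrightarrow> \<alpha> i = 0)}"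
proof -
  let ?ext = "\<lambda>f i. if i \<in> F then f i else (0::nat)"
  have "{\<alpha>::nat\<Rightarrow>nat. \<forall>i. \<alpha> i \<le> b i \<and> (i \<notin> F \<longrightarrow> \<alpha> i = 0)} \<subseteq> ?ext ` (PiE F (\<lambda>i. {..b i}))"
  proof
    fix \<alpha> assume a: "\<alpha> \<in> {\<alpha>::nat\<Rightarrow>nat. \<forall>i. \<alpha> i \<le> b i \<and> (i \<notin> F \<longrightarrow> \<alpha> i = 0)}"
    have "restrict \<alpha> F \<in> PiE F (\<lambda>i. {..b i})" using a by auto
    moreover have "\<alpha> = ?ext (restrict \<alpha> F)" using a by (auto simp: fun_eq_iff)
    ultimately show "\<alpha> \<in> ?ext ` (PiE F (\<lambda>i. {..b i}))" by blast
  qed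
  moreover have "finite (PiE F (\<lambda>i. {..b i}))" using assms by (intro finite_PiE) auto
  ultimately show ?thesis by (meson finite_imageI finite_subset)
qed

lemma finite_below:
  assumes "\<forall>i\<ge>n. \<gamma> i = 0"
  shows "finite {\<alpha>::nat\<Rightarrow>nat. \<forall>i. \<alpha> i \<le> \<gamma> i}"
proof -
  have "{\<alpha>::nat\<Rightarrow>nat. \<forall>i. \<alpha> i \<le> \<gamma> i} \<subseteq> {\<alpha>::nat\<Rightarrow>nat. \<forall>i. \<alpha> i \<le> \<gamma> i \<and> (i \<notin> {..<n} \<longrightarrow> \<alpha> i = 0)}"
    using assms by auto (metis le_zero_eq not_le)
  then show ?thesis using finite_bounded_funs[of "{..<n}" \<gamma>] finite_subset by blast
qed

lemma ring_aut_zero: "ring_automorphism f \<Longrightarrow> f 0 = 0"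
  unfolding ring_automorphism_def by (metis add_cancel_right_right)

lemma ring_aut_one: "ring_automorphism f \<Longrightarrow> f 1 = 1"
  unfolding ring_automorphism_def by simp

lemma funpow_fix: "f x = x \<Longrightarrow> (f ^^ k) x = x"
  by (induct k) auto

lemma aut_pow_fix:
  assumes "\<forall>i<k. \<sigma> i x = x"
  shows "aut_pow \<sigma> k e x = x"
  using assms by (induct k) (auto simp: funpow_fix)

lemma aut_pow_zero:
  assumes "commuting_automorphisms \<sigma> n"
  shows "aut_pow \<sigma> n e 0 = 0"
  using assms ring_aut_zero unfolding commuting_automorphisms_def by (intro aut_pow_fix) auto

lemma aut_pow_one:
  assumes "commuting_automorphisms \<sigma> n"
  shows "aut_pow \<sigma> n e 1 = 1"
  using assms ring_aut_one unfolding commuting_automorphisms_def by (intro aut_pow_fix) auto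

lemma aut_pow_scale:
  assumes "\<forall>i<k. dd i = d i"
  shows "aut_pow \<sigma> k (\<lambda>i. dd i * \<beta> i) = aut_pow (\<lambda>i. \<sigma> i ^^ d i) k \<beta>"
  using assms by (induct k) (auto simp: funpow_mult)




lemma finite_below_iff:
  "finite {\<alpha>::nat\<Rightarrow>nat. \<forall>i. \<alpha> i \<le> \<gamma> i} \<longleftrightarrow> finite {i. \<gamma> i \<noteq> 0}"
proof
  assume f: "finite {\<alpha>::nat\<Rightarrow>nat. \<forall>i. \<alpha> i \<le> \<gamma> i}"
  let ?e = "\<lambda>i::nat. (\<lambda>j. if j = i then 1 else 0::nat)"
  have "?e ` {i. \<gamma> i \<noteq> 0} \<subseteq> {\<alpha>::nat\<Rightarrow>nat. \<forall>i. \<alpha> i \<le> \<gamma> i}" by auto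
  moreover have "inj_on ?e {i. \<gamma> i \<noteq> 0}" by (auto simp: inj_on_def fun_eq_iff)
  ultimately show "finite {i. \<gamma> i \<noteq> 0}" using f by (meson finite_imageD finite_subset)
next
  assume "finite {i. \<gamma> i \<noteq> 0}"
  from finite_bounded_funs[OF this, of \<gamma>]
  show "finite {\<alpha>::nat\<Rightarrow>nat. \<forall>i. \<alpha> i \<le> \<gamma> i}"
    by (rule finite_subset[rotated]) (auto, metis le_zero_eq)
qed

definition scale_phi :: "(nat \<Rightarrow> nat) \<Rightarrow> ((nat\<Rightarrow>nat) \<Rightarrow> 'a::zero) \<Rightarrow> ((nat\<Rightarrow>nat) \<Rightarrow> 'a)" where
  "scale_phi dd x = (\<lambda>\<gamma>. if \<forall>i. dd i dvd \<gamma> i then x (\<lambda>i. \<gamma> i div dd i) else 0)"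

lemma phi_at:
  assumes "\<forall>i. 0 < dd i"
  shows "scale_phi dd x (\<lambda>i. dd i * \<beta> i) = x \<beta>"
  using assms unfolding scale_phi_def by simp

lemma phi_inj:
  assumes "\<forall>i. 0 < dd i" "scale_phi dd x = scale_phi dd y"
  shows "x = y"
proof
  fix \<beta> show "x \<beta> = y \<beta>" using phi_at[OF assms(1), of x \<beta>] phi_at[OF assms(1), of y \<beta>] assms(2) by simp
qed

lemma phi_mult:
  fixes x y :: "(nat \<Rightarrow> nat) \<Rightarrow> 'a::division_ring"
  assumes ca: "commuting_automorphisms \<sigma> n" and pos: "\<forall>i. 0 < dd i" and dd: "\<forall>i<n. dd i = d i"
  shows "skew_mult \<sigma> n (scale_phi dd x) (scale_phi dd y) = scale_phi dd (skew_mult (\<lambda>i. \<sigma> i ^^ d i) n x y)"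
proof
  fix \<gamma> :: "nat \<Rightarrow> nat"
  define M where "M \<beta> = (\<lambda>i. dd i * \<beta> i)" for \<beta> :: "nat \<Rightarrow> nat"
  have injM: "inj M" unfolding M_def inj_def fun_eq_iff using pos by (metis mult_cancel1 not_less0)
  define f where "f \<alpha> = scale_phi dd x \<alpha> * aut_pow \<sigma> n \<alpha> (scale_phi dd y (\<lambda>i. \<gamma> i - \<alpha> i))" for \<alpha>
  have L: "skew_mult \<sigma> n (scale_phi dd x) (scale_phi dd y) \<gamma> = sum f {\<alpha>. \<forall>i. \<alpha> i \<le> \<gamma> i}"
    unfolding skew_mult_def f_def by simp
  show "skew_mult \<sigma> n (scale_phi dd x) (scale_phi dd y) \<gamma> = scale_phi dd (skew_mult (\<lambda>i. \<sigma> i ^^ d i) n x y) \<gamma>"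
  proof (cases "\<forall>i. dd i dvd \<gamma> i")
    case True
    define \<delta> where "\<delta> i = \<gamma> i div dd i" for i
    have g: "\<gamma> = M \<delta>" unfolding M_def \<delta>_def fun_eq_iff using True by simp
    have R: "scale_phi dd (skew_mult (\<lambda>i. \<sigma> i ^^ d i) n x y) \<gamma>
        = (\<Sum>\<beta>\<in>{\<beta>. \<forall>i. \<beta> i \<le> \<delta> i}. x \<beta> * aut_pow (\<lambda>i. \<sigma> i ^^ d i) n \<beta> (y (\<lambda>i. \<delta> i - \<beta> i)))"
      unfolding scale_phi_def skew_mult_def \<delta>_def using True by simp
    have supp: "{i. \<gamma> i \<noteq> 0} = {i. \<delta> i \<noteq> 0}" unfolding g M_def using pos by auto
    have fM: "f (M \<beta>) = x \<beta> * aut_pow (\<lambda>i. \<sigma> i ^^ d i) n \<beta> (y (\<lambda>i. \<delta> i - \<beta> i))" for \<beta>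
    proof -
      have "(\<lambda>i. \<gamma> i - M \<beta> i) = M (\<lambda>i. \<delta> i - \<beta> i)" unfolding g M_def by (simp add: fun_eq_iff diff_mult_distrib2)
      then show ?thesis unfolding f_def M_def
        by (simp only: phi_at[OF pos, of x \<beta>] phi_at[OF pos, of y "\<lambda>i. \<delta> i - \<beta> i"] aut_pow_scale[OF dd, of \<sigma> \<beta>])
    qed
    show ?thesis
    proof (cases "finite {i. \<gamma> i \<noteq> 0}")
      case fin: True
      have fB: "finite {\<alpha>::nat\<Rightarrow>nat. \<forall>i. \<alpha> i \<le> \<gamma> i}" using fin finite_below_iff by blast
      have sub: "M ` {\<beta>. \<forall>i. \<beta> i \<le> \<delta> i} \<subseteq> {\<alpha>. \<forall>i. \<alpha> i \<le> \<gamma> i}"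
        unfolding g M_def using pos by auto
      have zero: "\<forall>\<alpha>\<in>{\<alpha>. \<forall>i. \<alpha> i \<le> \<gamma> i} - M ` {\<beta>. \<forall>i. \<beta> i \<le> \<delta> i}. f \<alpha> = 0"
      proof
        fix \<alpha> assume a: "\<alpha> \<in> {\<alpha>. \<forall>i. \<alpha> i \<le> \<gamma> i} - M ` {\<beta>. \<forall>i. \<beta> i \<le> \<delta> i}"
        have "\<not> (\<forall>i. dd i dvd \<alpha> i)"
        proof
          assume dv: "\<forall>i. dd i dvd \<alpha> i"
          define \<beta> where "\<beta> i = \<alpha> i div dd i" for i
          have "\<alpha> = M \<beta>" unfolding M_def \<beta>_def fun_eq_iff using dv by simp
          moreover have "\<forall>i. \<beta> i \<le> \<delta> i" unfolding \<beta>_def \<delta>_def using a by (simp add: div_le_mono)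
          ultimately show False using a by blast
        qed
        then have "scale_phi dd x \<alpha> = 0" unfolding scale_phi_def by meson
        then show "f \<alpha> = 0" unfolding f_def by simp
      qed
      have "sum f {\<alpha>. \<forall>i. \<alpha> i \<le> \<gamma> i} = sum f (M ` {\<beta>. \<forall>i. \<beta> i \<le> \<delta> i})"
        using sum.mono_neutral_right[OF fB sub zero] .
      also have "\<dots> = sum (f \<circ> M) {\<beta>. \<forall>i. \<beta> i \<le> \<delta> i}"
        using sum.reindex[of M] injM by (simp add: inj_on_def inj_def)
      also have "\<dots> = (\<Sum>\<beta>\<in>{\<beta>. \<forall>i. \<beta> i \<le> \<delta> i}. x \<beta> * aut_pow (\<lambda>i. \<sigma> i ^^ d i) n \<beta> (y (\<lambda>i. \<delta> i - \<beta> i)))"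
        using fM by simp
      finally show ?thesis using L R by simp
    next
      case inf: False
      have "infinite {\<alpha>::nat\<Rightarrow>nat. \<forall>i. \<alpha> i \<le> \<gamma> i}" "infinite {\<alpha>::nat\<Rightarrow>nat. \<forall>i. \<alpha> i \<le> \<delta> i}"
        using inf supp finite_below_iff by metis+
      then show ?thesis using L R by simp
    qed
  next
    case False
    have "f \<alpha> = 0" if a: "\<forall>i. \<alpha> i \<le> \<gamma> i" for \<alpha>
    proof (cases "\<forall>i. dd i dvd \<alpha> i")
      case True
      have "\<not> (\<forall>i. dd i dvd (\<gamma> i - \<alpha> i))"
      proof
        assume "\<forall>i. dd i dvd (\<gamma> i - \<alpha> i)"
        then have "\<forall>i. dd i dvd (\<alpha> i + (\<gamma> i - \<alpha> i))" using True by simp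
        then show False using False a by simp
      qed
      then have "scale_phi dd y (\<lambda>i. \<gamma> i - \<alpha> i) = 0" unfolding scale_phi_def by meson
      then show ?thesis unfolding f_def using aut_pow_zero[OF ca] by simp
    next
      case False
      then have "scale_phi dd x \<alpha> = 0" unfolding scale_phi_def by meson
      then show ?thesis unfolding f_def by simp
    qed
    then have "sum f {\<alpha>. \<forall>i. \<alpha> i \<le> \<gamma> i} = 0" by (intro sum.neutral) auto
    moreover have "scale_phi dd (skew_mult (\<lambda>i. \<sigma> i ^^ d i) n x y) \<gamma> = 0"
      using False unfolding scale_phi_def by meson
    ultimately show ?thesis using L by simp
  qed
qed




definition ddv :: "nat \<Rightarrow> (nat\<Rightarrow>nat) \<Rightarrow> nat \<Rightarrow> nat" where
  "ddv n d i = (if i < n then d i else 1)"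

context
  fixes \<sigma> :: "nat \<Rightarrow> 'a::division_ring \<Rightarrow> 'a" and n :: nat and d :: "nat \<Rightarrow> nat"
  assumes ca: "commuting_automorphisms \<sigma> n" and dpos: "\<forall>i<n. d i > 0"
begin

lemma pos: "\<forall>i. 0 < ddv n d i" using dpos unfolding ddv_def by auto
lemma ddeq: "\<forall>i<n. ddv n d i = d i" unfolding ddv_def by auto

lemma phi_add: fixes x y :: "(nat \<Rightarrow> nat) \<Rightarrow> 'a" shows "scale_phi (ddv n d) (\<lambda>e. x e + y e) = (\<lambda>e. scale_phi (ddv n d) x e + scale_phi (ddv n d) y e)"
  unfolding scale_phi_def by (auto simp: fun_eq_iff)

lemma phi_const: "scale_phi (ddv n d) (skew_const c) = (skew_const c :: (nat \<Rightarrow> nat) \<Rightarrow> 'a)"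
proof
  fix \<gamma> :: "nat \<Rightarrow> nat"
  have "(\<forall>i. ddv n d i dvd \<gamma> i) \<and> (\<lambda>i. \<gamma> i div ddv n d i) = (\<lambda>_. 0) \<longleftrightarrow> \<gamma> = (\<lambda>_. 0)"
    using pos by (auto simp: fun_eq_iff) (metis dvd_div_eq_0_iff)
  then show "scale_phi (ddv n d) (skew_const c) \<gamma> = (skew_const c :: (nat \<Rightarrow> nat) \<Rightarrow> 'a) \<gamma>"
    unfolding scale_phi_def skew_const_def by auto
qed

lemma phi_zero: "scale_phi (ddv n d) (\<lambda>_. 0) = (\<lambda>_. 0::'a)"
  unfolding scale_phi_def by auto

lemma phi_supp:
  "{e. scale_phi (ddv n d) x e \<noteq> (0::'a)} = (\<lambda>\<beta> i. ddv n d i * \<beta> i) ` {\<beta>. x \<beta> \<noteq> 0}"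
proof
  show "{e. scale_phi (ddv n d) x e \<noteq> 0} \<subseteq> (\<lambda>\<beta> i. ddv n d i * \<beta> i) ` {\<beta>. x \<beta> \<noteq> 0}"
  proof
    fix e assume "e \<in> {e. scale_phi (ddv n d) x e \<noteq> 0}"
    then have dv: "\<forall>i. ddv n d i dvd e i" and nz: "x (\<lambda>i. e i div ddv n d i) \<noteq> 0"
      unfolding scale_phi_def by (auto split: if_splits)
    have "e = (\<lambda>i. ddv n d i * (e i div ddv n d i))" using dv by (simp add: fun_eq_iff)
    then show "e \<in> (\<lambda>\<beta> i. ddv n d i * \<beta> i) ` {\<beta>. x \<beta> \<noteq> 0}" using nz
      by (intro image_eqI[where x="\<lambda>i. e i div ddv n d i"]) auto
  qed
  show "(\<lambda>\<beta> i. ddv n d i * \<beta> i) ` {\<beta>. x \<beta> \<noteq> 0} \<subseteq> {e. scale_phi (ddv n d) x e \<noteq> 0}"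
  proof
    fix e assume "e \<in> (\<lambda>\<beta> i. ddv n d i * \<beta> i) ` {\<beta>. x \<beta> \<noteq> 0}"
    then obtain \<beta> where "x \<beta> \<noteq> 0" "e = (\<lambda>i. ddv n d i * \<beta> i)" by blast
    then show "e \<in> {e. scale_phi (ddv n d) x e \<noteq> 0}" by (simp add: phi_at[OF pos])
  qed
qed

lemma injM: "inj (\<lambda>\<beta> i. ddv n d i * \<beta> i)"
  unfolding inj_def fun_eq_iff using pos by (metis mult_cancel1 not_less0)

lemma phi_carrier: "scale_phi (ddv n d) x \<in> skew_carrier n \<longleftrightarrow> (x :: (nat \<Rightarrow> nat) \<Rightarrow> 'a) \<in> skew_carrier n"
proof -
  have f: "finite {e. scale_phi (ddv n d) x e \<noteq> 0} \<longleftrightarrow> finite {\<beta>. x \<beta> \<noteq> 0}"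
    unfolding phi_supp using injM by (simp add: finite_image_iff inj_on_def inj_def)
  have s: "(\<forall>e. scale_phi (ddv n d) x e \<noteq> 0 \<longrightarrow> (\<forall>i\<ge>n. e i = 0)) \<longleftrightarrow> (\<forall>e. x e \<noteq> 0 \<longrightarrow> (\<forall>i\<ge>n. e i = 0))"
  proof
    assume H: "\<forall>e. scale_phi (ddv n d) x e \<noteq> 0 \<longrightarrow> (\<forall>i\<ge>n. e i = 0)"
    show "\<forall>e. x e \<noteq> 0 \<longrightarrow> (\<forall>i\<ge>n. e i = 0)"
    proof (intro allI impI)
      fix e i assume "x e \<noteq> 0" "n \<le> i"
      then have "ddv n d i * e i = 0" using H phi_at[OF pos, of x e] by metis
      moreover have "0 < ddv n d i" using pos by blast
      ultimately show "e i = 0" by simp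
    qed
  next
    assume H: "\<forall>e. x e \<noteq> 0 \<longrightarrow> (\<forall>i\<ge>n. e i = 0)"
    show "\<forall>e. scale_phi (ddv n d) x e \<noteq> 0 \<longrightarrow> (\<forall>i\<ge>n. e i = 0)"
    proof (intro allI impI)
      fix e i assume "scale_phi (ddv n d) x e \<noteq> 0" "n \<le> i"
      then obtain \<beta> where "x \<beta> \<noteq> 0" "e = (\<lambda>i. ddv n d i * \<beta> i)" using phi_supp by blast
      then show "e i = 0" using H \<open>n \<le> i\<close> by simp
    qed
  qed
  show ?thesis unfolding skew_carrier_def using f s by simp
qed

abbreviation "R \<equiv> skew_poly_ring \<sigma> n"
abbreviation "R' \<equiv> skew_poly_ring (\<lambda>i. \<sigma> i ^^ d i) n"
abbreviation "\<phi> \<equiv> scale_phi (ddv n d) :: ((nat \<Rightarrow> nat) \<Rightarrow> 'a) \<Rightarrow> _"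

lemma phi_mult': "\<phi> (x \<otimes>\<^bsub>R'\<^esub> y) = \<phi> x \<otimes>\<^bsub>R\<^esub> \<phi> y"
  unfolding skew_poly_ring_def using phi_mult[OF ca pos ddeq] by simp

lemma phi_add': "\<phi> (x \<oplus>\<^bsub>R'\<^esub> y) = \<phi> x \<oplus>\<^bsub>R\<^esub> \<phi> y"
  unfolding skew_poly_ring_def using phi_add by simp

lemma phi_one': "\<phi> \<one>\<^bsub>R'\<^esub> = \<one>\<^bsub>R\<^esub>"
  unfolding skew_poly_ring_def using phi_const by simp

lemma phi_carrier': "\<phi> x \<in> carrier R \<longleftrightarrow> x \<in> carrier R'"
  unfolding skew_poly_ring_def using phi_carrier by simp

lemma phi_inj': "\<phi> x = \<phi> y \<Longrightarrow> x = y"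
  using phi_inj[OF pos] by blast

lemma ring_R':
  assumes "ring R"
  shows "ring R'"
proof -
  interpret r: ring R by fact
  have ag: "abelian_group R'"
    using r.abelian_group_axioms unfolding abelian_group_def abelian_monoid_def abelian_group_axioms_def
    by (simp add: skew_poly_ring_def)
  have cl: "x \<otimes>\<^bsub>R'\<^esub> y \<in> carrier R'" if "x \<in> carrier R'" "y \<in> carrier R'" for x y
  proof -
    have "\<phi> x \<otimes>\<^bsub>R\<^esub> \<phi> y \<in> carrier R" using that phi_carrier' by blast
    then show ?thesis unfolding phi_mult'[symmetric] phi_carrier' .
  qed
  have mo: "monoid R'"
  proof (rule monoidI)
    show "\<one>\<^bsub>R'\<^esub> \<in> carrier R'" unfolding phi_carrier'[symmetric] phi_one' by (rule r.one_closed)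
    fix x y z assume c: "x \<in> carrier R'" "y \<in> carrier R'" "z \<in> carrier R'"
    show "x \<otimes>\<^bsub>R'\<^esub> y \<in> carrier R'" using cl c by blast
    have "\<phi> (x \<otimes>\<^bsub>R'\<^esub> y \<otimes>\<^bsub>R'\<^esub> z) = \<phi> (x \<otimes>\<^bsub>R'\<^esub> (y \<otimes>\<^bsub>R'\<^esub> z))"
      using c phi_carrier' by (simp add: phi_mult' r.m_assoc)
    then show "x \<otimes>\<^bsub>R'\<^esub> y \<otimes>\<^bsub>R'\<^esub> z = x \<otimes>\<^bsub>R'\<^esub> (y \<otimes>\<^bsub>R'\<^esub> z)" by (rule phi_inj')
    have "\<phi> (\<one>\<^bsub>R'\<^esub> \<otimes>\<^bsub>R'\<^esub> x) = \<phi> x" using c phi_carrier' by (simp add: phi_mult' phi_one')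
    then show "\<one>\<^bsub>R'\<^esub> \<otimes>\<^bsub>R'\<^esub> x = x" by (rule phi_inj')
    have "\<phi> (x \<otimes>\<^bsub>R'\<^esub> \<one>\<^bsub>R'\<^esub>) = \<phi> x" using c phi_carrier' by (simp add: phi_mult' phi_one')
    then show "x \<otimes>\<^bsub>R'\<^esub> \<one>\<^bsub>R'\<^esub> = x" by (rule phi_inj')
  qed
  have ra: "ring_axioms R'"
    unfolding ring_axioms_def
  proof (intro conjI allI impI)
    fix x y z assume c: "x \<in> carrier R'" "y \<in> carrier R'" "z \<in> carrier R'"
    have cc: "\<phi> x \<in> carrier R" "\<phi> y \<in> carrier R" "\<phi> z \<in> carrier R" using c phi_carrier' by auto
    have "\<phi> ((x \<oplus>\<^bsub>R'\<^esub> y) \<otimes>\<^bsub>R'\<^esub> z) = \<phi> (x \<otimes>\<^bsub>R'\<^esub> z \<oplus>\<^bsub>R'\<^esub> y \<otimes>\<^bsub>R'\<^esub> z)"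
      using cc by (simp add: phi_mult' phi_add' r.l_distr)
    then show "(x \<oplus>\<^bsub>R'\<^esub> y) \<otimes>\<^bsub>R'\<^esub> z = x \<otimes>\<^bsub>R'\<^esub> z \<oplus>\<^bsub>R'\<^esub> y \<otimes>\<^bsub>R'\<^esub> z" by (rule phi_inj')
    have "\<phi> (z \<otimes>\<^bsub>R'\<^esub> (x \<oplus>\<^bsub>R'\<^esub> y)) = \<phi> (z \<otimes>\<^bsub>R'\<^esub> x \<oplus>\<^bsub>R'\<^esub> z \<otimes>\<^bsub>R'\<^esub> y)"
      using cc by (simp add: phi_mult' phi_add' r.r_distr)
    then show "z \<otimes>\<^bsub>R'\<^esub> (x \<oplus>\<^bsub>R'\<^esub> y) = z \<otimes>\<^bsub>R'\<^esub> x \<oplus>\<^bsub>R'\<^esub> z \<otimes>\<^bsub>R'\<^esub> y" by (rule phi_inj')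
  qed
  show ?thesis unfolding ring_def using ag mo ra by blast
qed

lemma phi_hom:
  assumes "ring R"
  shows "ring_hom_ring R' R \<phi>"
  by (rule ring_hom_ringI2[OF ring_R'[OF assms] assms], rule ring_hom_memI)
     (auto simp: phi_carrier' phi_mult' phi_add' phi_one')

end




lemma finsum_pointwise:
  assumes "ring (skew_poly_ring \<sigma> n)" "finite A" "f \<in> A \<rightarrow> carrier (skew_poly_ring \<sigma> n)"
  shows "finsum (skew_poly_ring \<sigma> n) f A \<gamma> = (\<Sum>x\<in>A. f x \<gamma>)"
proof -
  interpret r: ring "skew_poly_ring \<sigma> n" by fact
  show ?thesis using assms(2,3)
  proof (induct A rule: finite_induct)
    case empty
    have "finsum (skew_poly_ring \<sigma> n) f {} = \<zero>\<^bsub>skew_poly_ring \<sigma> n\<^esub>" by simp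
    then show ?case by (simp add: skew_poly_ring_def)
  next
    case (insert x F)
    then have "finsum (skew_poly_ring \<sigma> n) f (insert x F) = f x \<oplus>\<^bsub>skew_poly_ring \<sigma> n\<^esub> finsum (skew_poly_ring \<sigma> n) f F"
      by (intro r.finsum_insert) auto
    then show ?case using insert by (simp add: skew_poly_ring_def)
  qed
qed

definition tmono :: "(nat \<Rightarrow> nat) \<Rightarrow> (nat \<Rightarrow> nat) \<Rightarrow> 'a::division_ring" where
  "tmono r = (\<lambda>\<gamma>. if \<gamma> = r then 1 else 0)"

lemma tmono_carrier: "\<forall>i\<ge>n. r i = 0 \<Longrightarrow> tmono r \<in> skew_carrier n"
  unfolding tmono_def skew_carrier_def by auto

lemma mult_tmono:
  assumes ca: "commuting_automorphisms \<sigma> n" and g: "\<forall>i\<ge>n. \<gamma> i = 0"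
  shows "skew_mult \<sigma> n q (tmono r) \<gamma> = (if \<forall>i. r i \<le> \<gamma> i then q (\<lambda>i. \<gamma> i - r i) else 0)"
proof -
  have fin: "finite {\<alpha>::nat\<Rightarrow>nat. \<forall>i. \<alpha> i \<le> \<gamma> i}" using finite_below[OF g] .
  have t: "q \<alpha> * aut_pow \<sigma> n \<alpha> (tmono r (\<lambda>i. \<gamma> i - \<alpha> i)) =
      (if \<alpha> = (\<lambda>i. \<gamma> i - r i) \<and> (\<forall>i. r i \<le> \<gamma> i) then q \<alpha> else 0)"
    if a: "\<forall>i. \<alpha> i \<le> \<gamma> i" for \<alpha>
  proof -
    have "(\<lambda>i. \<gamma> i - \<alpha> i) = r \<longleftrightarrow> \<alpha> = (\<lambda>i. \<gamma> i - r i) \<and> (\<forall>i. r i \<le> \<gamma> i)"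
      using a by (auto simp: fun_eq_iff) (metis diff_diff_cancel, metis diff_le_self)
    then show ?thesis unfolding tmono_def using aut_pow_one[OF ca] aut_pow_zero[OF ca] by auto
  qed
  have "skew_mult \<sigma> n q (tmono r) \<gamma> =
      (\<Sum>\<alpha>\<in>{\<alpha>. \<forall>i. \<alpha> i \<le> \<gamma> i}. if \<alpha> = (\<lambda>i. \<gamma> i - r i) \<and> (\<forall>i. r i \<le> \<gamma> i) then q \<alpha> else 0)"
    unfolding skew_mult_def using t by (intro sum.cong) auto
  also have "\<dots> = (\<Sum>\<alpha>\<in>{\<alpha>. \<forall>i. \<alpha> i \<le> \<gamma> i}. if \<alpha> = (\<lambda>i. \<gamma> i - r i) then (if (\<forall>i. r i \<le> \<gamma> i) then q \<alpha> else 0) else 0)"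
    by (intro sum.cong) auto
  also have "\<dots> = (if \<forall>i. r i \<le> \<gamma> i then q (\<lambda>i. \<gamma> i - r i) else 0)"
    using fin by (subst sum.delta) auto
  finally show ?thesis .
qed

lemma mod_char:
  assumes "(r::nat) < k"
  shows "(r \<le> g \<and> k dvd (g - r)) \<longleftrightarrow> r = g mod k"
proof
  assume "r \<le> g \<and> k dvd (g - r)"
  then obtain t where "g - r = k * t" "r \<le> g" by (auto elim: dvdE)
  then have "g = k * t + r" by simp
  then show "r = g mod k" using assms by simp
next
  assume "r = g mod k"
  then show "r \<le> g \<and> k dvd (g - r)" by (simp add: minus_mod_eq_mult_div)
qed




context
  fixes \<sigma> :: "nat \<Rightarrow> 'a::division_ring \<Rightarrow> 'a" and n :: nat and d :: "nat \<Rightarrow> nat"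
  assumes ca: "commuting_automorphisms \<sigma> n" and dpos: "\<forall>i<n. d i > 0"
begin

abbreviation "RR \<equiv> skew_poly_ring \<sigma> n"
abbreviation "RR' \<equiv> skew_poly_ring (\<lambda>i. \<sigma> i ^^ d i) n"
abbreviation "ph \<equiv> scale_phi (ddv n d) :: ((nat \<Rightarrow> nat) \<Rightarrow> 'a) \<Rightarrow> _"
abbreviation "dd \<equiv> ddv n d"

definition "Rset = {r::nat\<Rightarrow>nat. \<forall>i. r i < dd i}"
definition "pr p r = (\<lambda>\<beta>. p (\<lambda>i. dd i * \<beta> i + r i))"

lemma pos': "\<forall>i. 0 < dd i" using pos[OF ca dpos] .

lemma dd1: "i \<ge> n \<Longrightarrow> dd i = 1" unfolding ddv_def by simp

lemma Rset_supp: assumes "r \<in> Rset" shows "\<forall>i\<ge>n. r i = 0"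
proof (intro allI impI)
  fix i assume i: "n \<le> i"
  have "r i < dd i" using assms unfolding Rset_def by blast
  then show "r i = 0" using dd1[OF i] by simp
qed

lemma Rset_finite: "finite Rset"
proof -
  have "Rset \<subseteq> {\<alpha>::nat\<Rightarrow>nat. \<forall>i. \<alpha> i \<le> dd i \<and> (i \<notin> {..<n} \<longrightarrow> \<alpha> i = 0)}"
    using Rset_supp unfolding Rset_def by (auto simp: less_imp_le)
  then show ?thesis using finite_bounded_funs[of "{..<n}" dd] finite_subset by blast
qed

lemma pr_carrier:
  assumes "p \<in> skew_carrier n" "r \<in> Rset"
  shows "pr p r \<in> skew_carrier n"
proof -
  let ?T = "\<lambda>\<beta>::nat\<Rightarrow>nat. (\<lambda>i. dd i * \<beta> i + r i)"
  have inj: "inj ?T" unfolding inj_def fun_eq_iff using pos' by (metis add_right_cancel mult_cancel1 not_less0)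
  have "?T ` {\<beta>. pr p r \<beta> \<noteq> 0} \<subseteq> {e. p e \<noteq> 0}" unfolding pr_def by auto
  moreover have "finite {e. p e \<noteq> 0}" using assms unfolding skew_carrier_def by simp
  ultimately have f: "finite {\<beta>. pr p r \<beta> \<noteq> 0}"
    using inj by (meson finite_imageD finite_subset inj_on_subset subset_UNIV)
  have s: "\<forall>\<beta>. pr p r \<beta> \<noteq> 0 \<longrightarrow> (\<forall>i\<ge>n. \<beta> i = 0)"
  proof (intro allI impI)
    fix \<beta> i assume "pr p r \<beta> \<noteq> 0" "n \<le> i"
    then have "dd i * \<beta> i + r i = 0" using assms unfolding skew_carrier_def pr_def by blast
    then show "\<beta> i = 0" using dd1[OF \<open>n \<le> i\<close>] by simp
  qed
  show ?thesis unfolding skew_carrier_def using f s by simp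
qed

lemma decomp:
  assumes rR: "ring RR" and p: "p \<in> carrier RR"
  shows "p = finsum RR (\<lambda>r. ph (pr p r) \<otimes>\<^bsub>RR\<^esub> tmono r) Rset"
proof
  interpret r: ring RR by fact
  fix \<gamma>
  have pc: "p \<in> skew_carrier n" using p by (simp add: skew_poly_ring_def)
  have tc: "tmono r \<in> carrier RR" if "r \<in> Rset" for r
    using tmono_carrier[OF Rset_supp[OF that]] by (simp add: skew_poly_ring_def)
  have phc: "ph (pr p r) \<in> carrier RR" if "r \<in> Rset" for r
    using phi_carrier'[OF ca dpos] pr_carrier[OF pc that] by (simp add: skew_poly_ring_def)
  have termc: "ph (pr p r) \<otimes>\<^bsub>RR\<^esub> tmono r \<in> carrier RR" if "r \<in> Rset" for r
    using tc phc that by blast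
  have E: "finsum RR (\<lambda>r. ph (pr p r) \<otimes>\<^bsub>RR\<^esub> tmono r) Rset \<gamma> = (\<Sum>r\<in>Rset. (ph (pr p r) \<otimes>\<^bsub>RR\<^esub> tmono r) \<gamma>)"
    using finsum_pointwise[OF rR Rset_finite] termc by auto
  show "p \<gamma> = finsum RR (\<lambda>r. ph (pr p r) \<otimes>\<^bsub>RR\<^esub> tmono r) Rset \<gamma>"
  proof (cases "\<forall>i\<ge>n. \<gamma> i = 0")
    case False
    have z: "q \<gamma> = 0" if "q \<in> carrier RR" for q
      using that False unfolding skew_poly_ring_def skew_carrier_def by auto
    show ?thesis unfolding E using z[OF p] z[OF termc] by simp
  next
    case True
    define r0 where "r0 i = \<gamma> i mod dd i" for i
    have r0R: "r0 \<in> Rset" unfolding Rset_def r0_def using pos' by simp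
    have trm: "(ph (pr p r) \<otimes>\<^bsub>RR\<^esub> tmono r) \<gamma> = (if r = r0 then p \<gamma> else 0)" if rR: "r \<in> Rset" for r
    proof -
      have m: "(ph (pr p r) \<otimes>\<^bsub>RR\<^esub> tmono r) \<gamma> = (if \<forall>i. r i \<le> \<gamma> i then ph (pr p r) (\<lambda>i. \<gamma> i - r i) else 0)"
        using mult_tmono[OF ca True] by (simp add: skew_poly_ring_def)
      have ch: "(\<forall>i. r i \<le> \<gamma> i \<and> dd i dvd (\<gamma> i - r i)) \<longleftrightarrow> r = r0"
        using mod_char rR unfolding Rset_def r0_def by (auto simp: fun_eq_iff)
      show ?thesis
      proof (cases "r = r0")
        case True
        then have le: "\<forall>i. r i \<le> \<gamma> i" and dv: "\<forall>i. dd i dvd (\<gamma> i - r i)" using ch by auto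
        have "(\<lambda>i. dd i * ((\<gamma> i - r i) div dd i) + r i) = \<gamma>"
          using le dv by (auto simp: fun_eq_iff)
        then show ?thesis unfolding m using le dv True by (simp add: scale_phi_def pr_def)
      next
        case False
        then have "\<not> (\<forall>i. r i \<le> \<gamma> i \<and> dd i dvd (\<gamma> i - r i))" using ch by blast
        then have "(if \<forall>i. r i \<le> \<gamma> i then ph (pr p r) (\<lambda>i. \<gamma> i - r i) else 0) = 0"
          unfolding scale_phi_def by auto
        then show ?thesis unfolding m using False by simp
      qed
    qed
    have "(\<Sum>r\<in>Rset. (ph (pr p r) \<otimes>\<^bsub>RR\<^esub> tmono r) \<gamma>) = (\<Sum>r\<in>Rset. if r = r0 then p \<gamma> else 0)"
      using trm by (intro sum.cong) auto
    also have "\<dots> = p \<gamma>" using Rset_finite r0R by (subst sum.delta) auto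
    finally show ?thesis unfolding E by simp
  qed
qed

end




lemma skew_const_carrier: "skew_const c \<in> carrier (skew_poly_ring \<sigma> n)"
proof -
  have "{e. skew_const c e \<noteq> 0} \<subseteq> {(\<lambda>_. 0)}" unfolding skew_const_def by auto
  then have "finite {e. skew_const c e \<noteq> 0}" using finite_subset by blast
  moreover have "\<forall>e. skew_const c e \<noteq> 0 \<longrightarrow> (\<forall>i\<ge>n. e i = 0)" unfolding skew_const_def by auto
  ultimately show ?thesis by (simp add: skew_poly_ring_def skew_carrier_def)
qed

lemma main_step:
  fixes \<sigma> :: "nat \<Rightarrow> 'a::division_ring \<Rightarrow> 'a"
  assumes ca: "commuting_automorphisms \<sigma> n" and dpos: "\<forall>i<n. d i > 0"
    and I: "ideal I (skew_poly_ring \<sigma> n)" and Ip: "I \<noteq> carrier (skew_poly_ring \<sigma> n)"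
    and nN: "\<not> aut_normalizable (skew_poly_ring \<sigma> n Quot I) (\<lambda>b. I +>\<^bsub>skew_poly_ring \<sigma> n\<^esub> skew_const b)"
  shows "\<not> aut_normalizable_tuple (\<lambda>i. \<sigma> i ^^ d i) n"
proof -
  let ?R = "skew_poly_ring \<sigma> n"
  let ?R' = "skew_poly_ring (\<lambda>i. \<sigma> i ^^ d i) n"
  let ?ph = "scale_phi (ddv n d) :: ((nat \<Rightarrow> nat) \<Rightarrow> 'a) \<Rightarrow> _"
  let ?S = "?R Quot I"
  interpret Iid: ideal I ?R by fact
  have rR: "ring ?R" by (rule Iid.ring_axioms)
  have rR': "ring ?R'" using ring_R'[OF ca dpos rR] .
  have rS: "ring ?S" by (rule Iid.quotient_is_ring)
  have phh: "?ph \<in> ring_hom ?R' ?R" using ring_hom_ring.homh[OF phi_hom[OF ca dpos rR]] .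
  have pih: "a_r_coset ?R I \<in> ring_hom ?R ?S" by (rule Iid.rcos_ring_hom)
  define h where "h = a_r_coset ?R I \<circ> ?ph"
  have hh: "h \<in> ring_hom ?R' ?S" unfolding h_def using ring_hom_trans[OF phh pih] .
  have hr: "ring_hom_ring ?R' ?S h" using ring_hom_ringI2[OF rR' rS hh] .
  interpret hr: ring_hom_ring ?R' ?S h by fact
  define J where "J = a_kernel ?R' ?S h"
  have Jid: "ideal J ?R'" unfolding J_def by (rule hr.kernel_is_ideal)
  interpret Jid: ideal J ?R' by fact
  have Jp: "J \<noteq> carrier ?R'"
  proof
    assume "J = carrier ?R'"
    then have "\<one>\<^bsub>?R'\<^esub> \<in> J" by simp
    then have "h \<one>\<^bsub>?R'\<^esub> = \<zero>\<^bsub>?S\<^esub>" unfolding J_def a_kernel_def' by simp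
    then have "I +>\<^bsub>?R\<^esub> \<one>\<^bsub>?R\<^esub> = I" unfolding h_def using phi_one'[OF ca dpos]
      by (simp add: FactRing_def)
    then have "\<one>\<^bsub>?R\<^esub> \<in> I" using Iid.a_rcos_self[of "\<one>\<^bsub>?R\<^esub>"] by simp
    then show False using Iid.one_imp_carrier Ip by blast
  qed
  let ?S' = "?R' Quot J"
  define \<psi> where "\<psi> = (\<lambda>X. the_elem (h ` X))"
  let ?\<iota>' = "\<lambda>b. J +>\<^bsub>?R'\<^esub> skew_const b"
  let ?\<iota> = "\<lambda>b. I +>\<^bsub>?R\<^esub> skew_const b"
  have rS': "ring ?S'" by (rule Jid.quotient_is_ring)
  have psih: "ring_hom_ring ?S' ?S \<psi>"
    unfolding \<psi>_def J_def by (rule ring_hom_ringI2[OF _ rS hr.the_elem_hom]) (use rS' J_def in simp)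
  have psiinj: "inj_on \<psi> (carrier ?S')"
    using hr.FactRing_iso_set_aux unfolding \<psi>_def J_def ring_iso_def bij_betw_def by simp
  have pi'h: "a_r_coset ?R' J \<in> ring_hom ?R' ?S'" by (rule Jid.rcos_ring_hom)
  have iota'c: "\<forall>b. ?\<iota>' b \<in> carrier ?S'"
    using ring_hom_closed[OF pi'h skew_const_carrier] by blast
  have psi_coset: "\<psi> (J +>\<^bsub>?R'\<^esub> x) = h x" if "x \<in> carrier ?R'" for x
    unfolding \<psi>_def J_def using hr.the_elem_simp[OF that] .
  have hx: "h x = I +>\<^bsub>?R\<^esub> ?ph x" for x unfolding h_def by simp
  have iota: "\<forall>b. \<psi> (?\<iota>' b) = ?\<iota> b"
    using psi_coset[OF skew_const_carrier] hx phi_const[OF ca dpos] by simp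
  have Rf: "finite (Rset n d)" using Rset_finite[OF ca dpos] .
  have gK: "(\<lambda>r. I +>\<^bsub>?R\<^esub> tmono r) \<in> Rset n d \<rightarrow> carrier ?S"
  proof
    fix r assume "r \<in> Rset n d"
    then have "tmono r \<in> carrier ?R"
      using tmono_carrier[OF Rset_supp[OF ca dpos]] by (simp add: skew_poly_ring_def)
    then show "I +>\<^bsub>?R\<^esub> tmono r \<in> carrier ?S" using ring_hom_closed[OF pih] by blast
  qed
  have genK: "\<forall>s\<in>carrier ?S. \<exists>x. (\<forall>k\<in>Rset n d. x k \<in> \<psi> ` carrier ?S') \<and>
      s = finsum ?S (\<lambda>k. x k \<otimes>\<^bsub>?S\<^esub> (I +>\<^bsub>?R\<^esub> tmono k)) (Rset n d)"
  proof
    fix s assume "s \<in> carrier ?S"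
    then obtain p where p: "p \<in> carrier ?R" and sp: "s = I +>\<^bsub>?R\<^esub> p"
      unfolding FactRing_def A_RCOSETS_def' by auto
    have pc: "p \<in> skew_carrier n" using p by (simp add: skew_poly_ring_def)
    have prc: "pr n d p k \<in> carrier ?R'" if "k \<in> Rset n d" for k
      using pr_carrier[OF ca dpos pc that] by (simp add: skew_poly_ring_def)
    have tc: "tmono k \<in> carrier ?R" if "k \<in> Rset n d" for k
      using tmono_carrier[OF Rset_supp[OF ca dpos that]] by (simp add: skew_poly_ring_def)
    have phc: "?ph (pr n d p k) \<in> carrier ?R" if "k \<in> Rset n d" for k
      using phi_carrier'[OF ca dpos] prc[OF that] by blast
    have xin: "\<forall>k\<in>Rset n d. h (pr n d p k) \<in> \<psi> ` carrier ?S'"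
    proof
      fix k assume k: "k \<in> Rset n d"
      have mem: "J +>\<^bsub>?R'\<^esub> pr n d p k \<in> carrier ?S'" using ring_hom_closed[OF pi'h prc[OF k]] .
      have e: "\<psi> (J +>\<^bsub>?R'\<^esub> pr n d p k) = h (pr n d p k)" using psi_coset[OF prc[OF k]] .
      show "h (pr n d p k) \<in> \<psi> ` carrier ?S'" unfolding e[symmetric] by (rule imageI[OF mem])
    qed
    have fc: "(\<lambda>r. ?ph (pr n d p r) \<otimes>\<^bsub>?R\<^esub> tmono r) \<in> Rset n d \<rightarrow> carrier ?R"
      using phc tc by (auto intro: Iid.m_closed)
    have "s = I +>\<^bsub>?R\<^esub> finsum ?R (\<lambda>r. ?ph (pr n d p r) \<otimes>\<^bsub>?R\<^esub> tmono r) (Rset n d)"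
      using sp decomp[OF ca dpos rR p] by simp
    also have "\<dots> = finsum ?S (a_r_coset ?R I \<circ> (\<lambda>r. ?ph (pr n d p r) \<otimes>\<^bsub>?R\<^esub> tmono r)) (Rset n d)"
      using hom_finsum'[OF Iid.rcos_ring_hom_ring fc] .
    also have "\<dots> = finsum ?S (\<lambda>k. h (pr n d p k) \<otimes>\<^bsub>?S\<^esub> (I +>\<^bsub>?R\<^esub> tmono k)) (Rset n d)"
    proof (intro abelian_monoid.finsum_cong')
      show "abelian_monoid ?S" using rS by (simp add: ring_def abelian_group_def)
      show "(\<lambda>k. h (pr n d p k) \<otimes>\<^bsub>?S\<^esub> (I +>\<^bsub>?R\<^esub> tmono k)) \<in> Rset n d \<rightarrow> carrier ?S"
      proof
        fix k assume k: "k \<in> Rset n d"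
        have "h (pr n d p k) \<in> carrier ?S" using hr.hom_closed[OF prc[OF k]] .
        moreover have "I +>\<^bsub>?R\<^esub> tmono k \<in> carrier ?S" using gK k by blast
        ultimately show "h (pr n d p k) \<otimes>\<^bsub>?S\<^esub> (I +>\<^bsub>?R\<^esub> tmono k) \<in> carrier ?S"
          by (rule monoid.m_closed[OF ring.is_monoid[OF rS]])
      qed
      fix k assume k: "k \<in> Rset n d"
      show "(a_r_coset ?R I \<circ> (\<lambda>r. ?ph (pr n d p r) \<otimes>\<^bsub>?R\<^esub> tmono r)) k = h (pr n d p k) \<otimes>\<^bsub>?S\<^esub> (I +>\<^bsub>?R\<^esub> tmono k)"
        using ring_hom_mult[OF pih phc[OF k] tc[OF k]] hx by simp
    qed simp
    finally show "\<exists>x. (\<forall>k\<in>Rset n d. x k \<in> \<psi> ` carrier ?S') \<and>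
      s = finsum ?S (\<lambda>k. x k \<otimes>\<^bsub>?S\<^esub> (I +>\<^bsub>?R\<^esub> tmono k)) (Rset n d)"
      by (intro exI[of _ "\<lambda>k. h (pr n d p k)"] conjI xin)
  qed
  show ?thesis
  proof
    assume "aut_normalizable_tuple (\<lambda>i. \<sigma> i ^^ d i) n"
    then have "aut_normalizable ?S' ?\<iota>'"
      using Jid Jp unfolding aut_normalizable_tuple_def by blast
    then have "aut_normalizable ?S ?\<iota>"
      using transfer_normalizable[OF rS' rS psih psiinj iota'c iota Rf gK genK] by blast
    then show False using nN by blast
  qed
qed




theorem proposition5p1:
  fixes \<sigma> :: "nat \<Rightarrow> 'a::division_ring \<Rightarrow> 'a" and n :: nat and d :: "nat \<Rightarrow> nat"
  assumes "commuting_automorphisms \<sigma> n"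
    and "\<not> aut_normalizable_tuple \<sigma> n"
    and "\<forall>i<n. d i > 0"
  shows "\<not> aut_normalizable_tuple (\<lambda>i. \<sigma> i ^^ d i) n"
proof -
  obtain I where I: "ideal I (skew_poly_ring \<sigma> n)" "I \<noteq> carrier (skew_poly_ring \<sigma> n)"
    "\<not> aut_normalizable (skew_poly_ring \<sigma> n Quot I) (\<lambda>b. I +>\<^bsub>skew_poly_ring \<sigma> n\<^esub> skew_const b)"
    using assms(2) unfolding aut_normalizable_tuple_def by blast
  show ?thesis using main_step[OF assms(1) assms(3) I] .
qed



end
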